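(* Let $\sigma$ be a finite relational signature and let $\mathcal{A}$ and $\mathcal{B}$ be finite $\sigma$-structures with domains $A$ and $B$. The following are equivalent: (I) there is a surjective homomorphism from $\mathcal{A}^{|A|^{|B|}}$ to $\mathcal{B}$; (II) there exists a positive integer $r<\omega$ such that there is a surjective homomorphism from $\mathcal{A}^r$ to $\mathcal{B}$; (III) $\mathrm{QCSP}(\mathcal{A}) \subseteq \mathrm{QCSP}(\mathcal{B})$; (IV) $\Pi_2\text{-}\mathrm{CSP}(\mathcal{A}) \subseteq \Pi_2\text{-}\mathrm{CSP}(\mathcal{B})$.
   Context: A homomorphism $h:\mathcal{A}\to\mathcal{B}$ is a map $A\to B$ such that for every $p$-ary $R\in\sigma$, $(a_1,\dots,a_p)\in R^{\mathcal{A}}$ implies $(h(a_1),\dots,h(a_p))\in R^{\mathcal{B}}$. For a cardinal $m$, $\mathcal{A}^m$ is the direct (categorical) power: domain $A^m$, and a tuple of elements is in $R^{\mathcal{A}^m}$ iff it is in $R^{\mathcal{A}}$ coordinatewise. A positive Horn (pH) sentence is a first-order sentence built from atomic formulas (relational atoms of $\sigma$ and equalities) using only $\exists$, $\forall$ and $\wedge$; it can be put in prenex form $\forall \bar x_1\exists\bar y_1\cdots\forall\bar x_k\exists\bar y_k\,P$ with $P$ a conjunction of atoms. $\mathrm{QCSP}(\mathcal{A})$ denotes the set of pH sentences true in $\mathcal{A}$; $\Pi_2\text{-}\mathrm{CSP}(\mathcal{A})$ denotes the set of pH sentences of the form $\forall\bar x_1\exists\bar y_1\,P$ ($P$ a conjunction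 of atoms) true in $\mathcal{A}$. *)

theory Defs
  imports "HOL-Library.FuncSet"
begin

record ('r, 'a) struc =
  dom :: "'a set"
  rel :: "'r \<Rightarrow> 'a list set"

definition is_struc :: "'r set \<Rightarrow> ('r \<Rightarrow> nat) \<Rightarrow> ('r, 'a) struc \<Rightarrow> bool" where
  "is_struc Sig ar S \<longleftrightarrow> dom S \<noteq> {} \<and>
     (\<forall>R\<in>Sig. \<forall>t\<in>rel S R. length t = ar R \<and> set t \<subseteq> dom S)"

definition hom :: "'r set \<Rightarrow> ('r, 'a) struc \<Rightarrow> ('r, 'b) struc \<Rightarrow> ('a \<Rightarrow> 'b) \<Rightarrow> bool" where
  "hom Sig S T h \<longleftrightarrow> h ` dom S \<subseteq> dom T \<and>
     (\<forall>R\<in>Sig. \<forall>t\<in>rel S R. map h t \<in> rel T R)"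

definition surj_hom :: "'r set \<Rightarrow> ('r, 'a) struc \<Rightarrow> ('r, 'b) struc \<Rightarrow> ('a \<Rightarrow> 'b) \<Rightarrow> bool" where
  "surj_hom Sig S T h \<longleftrightarrow> hom Sig S T h \<and> h ` dom S = dom T"

definition pow :: "('r \<Rightarrow> nat) \<Rightarrow> ('r, 'a) struc \<Rightarrow> nat \<Rightarrow> ('r, nat \<Rightarrow> 'a) struc" where
  "pow ar S m = \<lparr> dom = PiE {..<m} (\<lambda>_. dom S),
     rel = (\<lambda>R. {t. length t = ar R \<and> set t \<subseteq> PiE {..<m} (\<lambda>_. dom S) \<and>
                     (\<forall>i<m. map (\<lambda>f. f i) t \<in> rel S R)}) \<rparr>"

datatype 'r pH =
    Atom 'r "nat list"
  | Eq nat nat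
  | Conj "'r pH" "'r pH"
  | Ex nat "'r pH"
  | All nat "'r pH"

fun fv :: "'r pH \<Rightarrow> nat set" where
  "fv (Atom R xs) = set xs"
| "fv (Eq x y) = {x, y}"
| "fv (Conj p q) = fv p \<union> fv q"
| "fv (Ex x p) = fv p - {x}"
| "fv (All x p) = fv p - {x}"

fun wf_pH :: "'r set \<Rightarrow> ('r \<Rightarrow> nat) \<Rightarrow> 'r pH \<Rightarrow> bool" where
  "wf_pH Sig ar (Atom R xs) \<longleftrightarrow> R \<in> Sig \<and> length xs = ar R"
| "wf_pH Sig ar (Eq x y) \<longleftrightarrow> True"
| "wf_pH Sig ar (Conj p q) \<longleftrightarrow> wf_pH Sig ar p \<and> wf_pH Sig ar q"
| "wf_pH Sig ar (Ex x p) \<longleftrightarrow> wf_pH Sig ar p"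
| "wf_pH Sig ar (All x p) \<longleftrightarrow> wf_pH Sig ar p"

fun sat :: "('r, 'a) struc \<Rightarrow> 'r pH \<Rightarrow> (nat \<Rightarrow> 'a) \<Rightarrow> bool" where
  "sat S (Atom R xs) e \<longleftrightarrow> map e xs \<in> rel S R"
| "sat S (Eq x y) e \<longleftrightarrow> e x = e y"
| "sat S (Conj p q) e \<longleftrightarrow> sat S p e \<and> sat S q e"
| "sat S (Ex x p) e \<longleftrightarrow> (\<exists>a\<in>dom S. sat S p (e(x := a)))"
| "sat S (All x p) e \<longleftrightarrow> (\<forall>a\<in>dom S. sat S p (e(x := a)))"

fun qfree :: "'r pH \<Rightarrow> bool" where
  "qfree (Atom R xs) = True"
| "qfree (Eq x y) = True"
| "qfree (Conj p q) = (qfree p \<and> qfree q)"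
| "qfree (Ex x p) = False"
| "qfree (All x p) = False"

definition is_Pi2 :: "'r pH \<Rightarrow> bool" where
  "is_Pi2 \<phi> \<longleftrightarrow> (\<exists>xs ys P. qfree P \<and> \<phi> = foldr All xs (foldr Ex ys P))"

text \<open>Truth of a sentence: closed, so the assignment is irrelevant.\<close>
definition QCSP :: "'r set \<Rightarrow> ('r \<Rightarrow> nat) \<Rightarrow> ('r, 'a) struc \<Rightarrow> 'r pH set" where
  "QCSP Sig ar S = {\<phi>. wf_pH Sig ar \<phi> \<and> fv \<phi> = {} \<and> (\<forall>e. sat S \<phi> e)}"

definition Pi2_CSP :: "'r set \<Rightarrow> ('r \<Rightarrow> nat) \<Rightarrow> ('r, 'a) struc \<Rightarrow> 'r pH set" where
  "Pi2_CSP Sig ar S = {\<phi>\<in>QCSP Sig ar S. is_Pi2 \<phi>}"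

end

theory Submission
  imports Defs
begin



lemma sat_agree:
  "(\<And>x. x \<in> fv p \<Longrightarrow> e x = e' x) \<Longrightarrow> sat S p e = sat S p e'"
proof (induction p arbitrary: e e')
  case (Ex x p)
  have "sat S p (e(x:=a)) = sat S p (e'(x:=a))" for a
    by (rule Ex.IH) (use Ex.prems in auto)
  then show ?case by simp
next
  case (All x p)
  have "sat S p (e(x:=a)) = sat S p (e'(x:=a))" for a
    by (rule All.IH) (use All.prems in auto)
  then show ?case by simp
next
  case (Atom R xs)
  have eq: "map e xs = map e' xs" using Atom.prems by (simp add: map_eq_conv)
  show ?case by (simp only: sat.simps eq)
next
  case (Eq x y)
  then show ?case by simp
next
  case (Conj p q)
  have "sat S p e = sat S p e'" by (rule Conj.IH(1)) (use Conj.prems in auto)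
  moreover have "sat S q e = sat S q e'" by (rule Conj.IH(2)) (use Conj.prems in auto)
  ultimately show ?case by simp
qed


lemma sat_hom:
  assumes h: "surj_hom Sig S T h" and wf: "wf_pH Sig ar p"
    and e: "\<And>x. e x \<in> dom S" and s: "sat S p e"
  shows "sat T p (h \<circ> e)"
  using wf e s
proof (induction p arbitrary: e)
  case (Atom R xs)
  have H: "\<forall>R\<in>Sig. \<forall>t\<in>rel S R. map h t \<in> rel T R" using h by (simp add: surj_hom_def hom_def)
  have "map h (map e xs) \<in> rel T R" by (rule H[rule_format]) (use Atom.prems in auto)
  then show ?case by (simp add: o_def)
next
  case (Eq x y)
  then show ?case by simp
next
  case (Conj p q)
  have "sat T p (h \<circ> e)" by (rule Conj.IH(1)) (use Conj.prems in auto)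
  moreover have "sat T q (h \<circ> e)" by (rule Conj.IH(2)) (use Conj.prems in auto)
  ultimately show ?case by (simp only: sat.simps)
next
  case (Ex x p)
  have wfp: "wf_pH Sig ar p" using Ex.prems(1) by simp
  obtain a where a: "a \<in> dom S" "sat S p (e(x:=a))" using Ex.prems(3) by auto
  have ex: "\<And>y. (e(x:=a)) y \<in> dom S" using Ex.prems(2) a(1) by simp
  have "sat T p (h \<circ> (e(x:=a)))" by (rule Ex.IH[OF wfp ex a(2)])
  moreover have "h \<circ> (e(x:=a)) = (h \<circ> e)(x := h a)" by auto
  moreover have "h a \<in> dom T" using h a unfolding surj_hom_def hom_def by auto
  ultimately have "\<exists>b\<in>dom T. sat T p ((h \<circ> e)(x := b))" by metis
  then show ?case by (simp only: sat.simps)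
next
  case (All x p)
  have wfp: "wf_pH Sig ar p" using All.prems(1) by simp
  have "\<forall>b\<in>dom T. sat T p ((h \<circ> e)(x := b))"
  proof
    fix b assume "b \<in> dom T"
    then obtain a where a: "a \<in> dom S" "b = h a" using h unfolding surj_hom_def by auto
    have ex: "\<And>y. (e(x:=a)) y \<in> dom S" using All.prems(2) a(1) by simp
    have "sat S p (e(x:=a))" using All.prems(3) a(1) by simp
    then have "sat T p (h \<circ> (e(x:=a)))" by (rule All.IH[OF wfp ex])
    moreover have "h \<circ> (e(x:=a)) = (h \<circ> e)(x := h a)" by auto
    ultimately show "sat T p ((h \<circ> e)(x := b))" using a by metis
  qed
  then show ?case by (simp only: sat.simps)
qed


lemma sat_pow:
  assumes wf: "wf_pH Sig ar p"
    and e: "\<And>x. e x \<in> dom (pow ar A r)" and s: "\<And>i. i < r \<Longrightarrow> sat A p (\<lambda>x. e x i)"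
  shows "sat (pow ar A r) p e"
  using wf e s
proof (induction p arbitrary: e)
  case (Atom R xs)
  then show ?case by (auto simp: pow_def map_map o_def)
next
  case (Eq x y)
  have "e x \<in> PiE {..<r} (\<lambda>_. dom A)" "e y \<in> PiE {..<r} (\<lambda>_. dom A)"
    using Eq.prems(2) by (simp_all add: pow_def)
  moreover have "\<And>i. i \<in> {..<r} \<Longrightarrow> e x i = e y i" using Eq.prems(3) by simp
  ultimately have "e x = e y" by (rule PiE_ext)
  then show ?case by simp
next
  case (Ex x p)
  have ex: "\<forall>i\<in>{..<r}. \<exists>a. a \<in> dom A \<and> sat A p ((\<lambda>y. e y i)(x:=a))" using Ex.prems by auto
  obtain c where c: "\<And>i. i < r \<Longrightarrow> c i \<in> dom A \<and> sat A p ((\<lambda>y. e y i)(x:=c i))"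
    using bchoice[OF ex] by auto
  define a where "a = restrict c {..<r}"
  have aD: "a \<in> dom (pow ar A r)" using c by (auto simp: pow_def a_def)
  have "sat (pow ar A r) p (e(x:=a))"
  proof (rule Ex.IH)
    show "wf_pH Sig ar p" using Ex by simp
    show "\<And>y. (e(x := a)) y \<in> dom (pow ar A r)" using aD Ex.prems by auto
    fix i assume i: "i < r"
    have "(\<lambda>y. (e(x := a)) y i) = (\<lambda>y. e y i)(x := c i)" using i by (auto simp: a_def)
    then show "sat A p (\<lambda>y. (e(x := a)) y i)" using c i by simp
  qed
  then show ?case using aD by auto
next
  case (All x p)
  show ?case
  proof (simp, intro ballI)
    fix a assume aD: "a \<in> dom (pow ar A r)"
    show "sat (pow ar A r) p (e(x:=a))"
    proof (rule All.IH)
      show "wf_pH Sig ar p" using All by simp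
      show "\<And>y. (e(x := a)) y \<in> dom (pow ar A r)" using aD All.prems by auto
      fix i assume i: "i < r"
      have ai: "a i \<in> dom A" using aD i by (auto simp: pow_def)
      have "(\<lambda>y. (e(x := a)) y i) = (\<lambda>y. e y i)(x := a i)" by auto
      then show "sat A p (\<lambda>y. (e(x := a)) y i)" using All.prems(3)[OF i] ai by simp
    qed
  qed
qed auto



lemma sat_foldr_Ex:
  "sat S (foldr Ex xs p) e \<longleftrightarrow>
   (\<exists>e'. (\<forall>v. v \<notin> set xs \<longrightarrow> e' v = e v) \<and> (\<forall>v\<in>set xs. e' v \<in> dom S) \<and> sat S p e')"
proof (induction xs arbitrary: e)
  case Nil
  show ?case
  proof
    assume "sat S (foldr Ex [] p) e" then show "\<exists>e'. (\<forall>v. v \<notin> set [] \<longrightarrow> e' v = e v) \<and> (\<forall>v\<in>set []. e' v \<in> dom S) \<and> sat S p e'"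
      by (intro exI[of _ e]) simp
  next
    assume "\<exists>e'. (\<forall>v. v \<notin> set [] \<longrightarrow> e' v = e v) \<and> (\<forall>v\<in>set []. e' v \<in> dom S) \<and> sat S p e'"
    then obtain e' where "\<forall>v. e' v = e v" "sat S p e'" by auto
    moreover have "e' = e" using calculation(1) by (intro ext) simp
    ultimately show "sat S (foldr Ex [] p) e" by simp
  qed
next
  case (Cons x xs)
  show ?case
  proof
    assume "sat S (foldr Ex (x # xs) p) e"
    then obtain a where a: "a \<in> dom S" "sat S (foldr Ex xs p) (e(x:=a))" by auto
    then obtain e' where e': "\<forall>v. v \<notin> set xs \<longrightarrow> e' v = (e(x:=a)) v"
      "\<forall>v\<in>set xs. e' v \<in> dom S" "sat S p e'" using Cons.IH by blast
    show "\<exists>e'. (\<forall>v. v \<notin> set (x#xs) \<longrightarrow> e' v = e v) \<and> (\<forall>v\<in>set (x#xs). e' v \<in> dom S) \<and> sat S p e'"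
    proof (intro exI[of _ e'] conjI)
      show "\<forall>v. v \<notin> set (x#xs) \<longrightarrow> e' v = e v"
      proof (intro allI impI)
        fix v assume "v \<notin> set (x#xs)"
        then have "v \<noteq> x" "v \<notin> set xs" by auto
        then show "e' v = e v" using e'(1) by simp
      qed
      have "e' x \<in> dom S"
      proof (cases "x \<in> set xs")
        case True then show ?thesis using e'(2) by blast
      next
        case False then have "e' x = (e(x:=a)) x" using e'(1) by blast
        then show ?thesis using a(1) by simp
      qed
      then show "\<forall>v\<in>set (x#xs). e' v \<in> dom S" using e'(2) by simp
      show "sat S p e'" by (rule e'(3))
    qed
  next
    assume "\<exists>e'. (\<forall>v. v \<notin> set (x#xs) \<longrightarrow> e' v = e v) \<and> (\<forall>v\<in>set (x#xs). e' v \<in> dom S) \<and> sat S p e'"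
    then obtain e' where e': "\<forall>v. v \<notin> set (x#xs) \<longrightarrow> e' v = e v" "\<forall>v\<in>set (x#xs). e' v \<in> dom S" "sat S p e'" by blast
    have ag: "\<forall>v. v \<notin> set xs \<longrightarrow> e' v = (e(x:=e' x)) v"
    proof (intro allI impI)
      fix v assume v: "v \<notin> set xs"
      show "e' v = (e(x:=e' x)) v"
      proof (cases "v = x")
        case False then show ?thesis using e'(1) v by simp
      qed simp
    qed
    have "\<forall>v\<in>set xs. e' v \<in> dom S" using e'(2) by simp
    then have "sat S (foldr Ex xs p) (e(x:=e' x))" using Cons.IH ag e'(3) by blast
    moreover have "e' x \<in> dom S" using e'(2) by simp
    ultimately have "\<exists>a\<in>dom S. sat S (foldr Ex xs p) (e(x:=a))" by blast
    then show "sat S (foldr Ex (x # xs) p) e" by simp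
  qed
qed

lemma sat_foldr_All:
  "sat S (foldr All xs p) e \<longleftrightarrow>
   (\<forall>e'. (\<forall>v. v \<notin> set xs \<longrightarrow> e' v = e v) \<and> (\<forall>v\<in>set xs. e' v \<in> dom S) \<longrightarrow> sat S p e')"
proof (induction xs arbitrary: e)
  case Nil
  show ?case
  proof
    assume "sat S (foldr All [] p) e"
    then show "\<forall>e'. (\<forall>v. v \<notin> set [] \<longrightarrow> e' v = e v) \<and> (\<forall>v\<in>set []. e' v \<in> dom S) \<longrightarrow> sat S p e'"
    proof (intro allI impI)
      fix e' assume "sat S (foldr All [] p) e" "(\<forall>v. v \<notin> set [] \<longrightarrow> e' v = e v) \<and> (\<forall>v\<in>set []. e' v \<in> dom S)"
      moreover have "e' = e" using calculation(2) by (intro ext) simp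
      ultimately show "sat S p e'" by simp
    qed
  next
    assume "\<forall>e'. (\<forall>v. v \<notin> set [] \<longrightarrow> e' v = e v) \<and> (\<forall>v\<in>set []. e' v \<in> dom S) \<longrightarrow> sat S p e'"
    then have "sat S p e" by simp
    then show "sat S (foldr All [] p) e" by simp
  qed
next
  case (Cons x xs)
  show ?case
  proof
    assume H: "sat S (foldr All (x # xs) p) e"
    show "\<forall>e'. (\<forall>v. v \<notin> set (x#xs) \<longrightarrow> e' v = e v) \<and> (\<forall>v\<in>set (x#xs). e' v \<in> dom S) \<longrightarrow> sat S p e'"
    proof (intro allI impI)
      fix e' assume e': "(\<forall>v. v \<notin> set (x#xs) \<longrightarrow> e' v = e v) \<and> (\<forall>v\<in>set (x#xs). e' v \<in> dom S)"
      have "e' x \<in> dom S" using e' by simp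
      then have "sat S (foldr All xs p) (e(x:=e' x))" using H by simp
      moreover have "\<forall>v. v \<notin> set xs \<longrightarrow> e' v = (e(x:=e' x)) v"
      proof (intro allI impI)
        fix v assume v: "v \<notin> set xs"
        show "e' v = (e(x:=e' x)) v"
        proof (cases "v = x")
          case False then show ?thesis using e' v by simp
        qed simp
      qed
      moreover have "\<forall>v\<in>set xs. e' v \<in> dom S" using e' by simp
      ultimately show "sat S p e'" using Cons.IH by blast
    qed
  next
    assume H: "\<forall>e'. (\<forall>v. v \<notin> set (x#xs) \<longrightarrow> e' v = e v) \<and> (\<forall>v\<in>set (x#xs). e' v \<in> dom S) \<longrightarrow> sat S p e'"
    have "\<forall>a\<in>dom S. sat S (foldr All xs p) (e(x := a))"
    proof
      fix a assume a: "a \<in> dom S"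
      have "\<forall>e'. (\<forall>v. v \<notin> set xs \<longrightarrow> e' v = (e(x:=a)) v) \<and> (\<forall>v\<in>set xs. e' v \<in> dom S) \<longrightarrow> sat S p e'"
      proof (intro allI impI)
        fix e' assume e': "(\<forall>v. v \<notin> set xs \<longrightarrow> e' v = (e(x:=a)) v) \<and> (\<forall>v\<in>set xs. e' v \<in> dom S)"
        have c1: "\<forall>v. v \<notin> set (x#xs) \<longrightarrow> e' v = e v"
        proof (intro allI impI)
          fix v assume "v \<notin> set (x#xs)"
          then have "v \<noteq> x" "v \<notin> set xs" by auto
          then show "e' v = e v" using e' by simp
        qed
        have "e' x \<in> dom S"
        proof (cases "x \<in> set xs")
          case True then show ?thesis using e' by blast
        next
          case False then have "e' x = (e(x:=a)) x" using e' by blast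
          then show ?thesis using a by simp
        qed
        then have c2: "\<forall>v\<in>set (x#xs). e' v \<in> dom S" using e' by simp
        show "sat S p e'" using H c1 c2 by blast
      qed
      then show "sat S (foldr All xs p) (e(x := a))" using Cons.IH by blast
    qed
    then show "sat S (foldr All (x # xs) p) e" by simp
  qed
qed


lemma sat_foldr_Conj: "sat S (foldr Conj qs b) e \<longleftrightarrow> sat S b e \<and> (\<forall>q\<in>set qs. sat S q e)"
  by (induction qs) auto

lemma fv_foldr_Conj: "fv (foldr Conj qs b) = fv b \<union> (\<Union>q\<in>set qs. fv q)"
  by (induction qs) auto
lemma fv_foldr_Ex: "fv (foldr Ex xs b) = fv b - set xs"
  by (induction xs) auto
lemma fv_foldr_All: "fv (foldr All xs b) = fv b - set xs"
  by (induction xs) auto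
lemma wf_foldr_Conj: "wf_pH Sig ar (foldr Conj qs b) \<longleftrightarrow> wf_pH Sig ar b \<and> (\<forall>q\<in>set qs. wf_pH Sig ar q)"
  by (induction qs) auto
lemma wf_foldr_Ex: "wf_pH Sig ar (foldr Ex xs b) = wf_pH Sig ar b"
  by (induction xs) auto
lemma wf_foldr_All: "wf_pH Sig ar (foldr All xs b) = wf_pH Sig ar b"
  by (induction xs) auto
lemma qfree_foldr_Conj: "qfree (foldr Conj qs b) \<longleftrightarrow> qfree b \<and> (\<forall>q\<in>set qs. qfree q)"
  by (induction qs) auto



lemma canon:
  fixes Sig :: "'r set" and ar :: "'r \<Rightarrow> nat"
    and A :: "('r, 'a) struc" and B :: "('r, 'b) struc"
  assumes fS: "finite Sig"
    and sA: "is_struc Sig ar A" and sB: "is_struc Sig ar B"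
    and fA: "finite (dom A)" and fB: "finite (dom B)"
    and inc: "Pi2_CSP Sig ar A \<subseteq> Pi2_CSP Sig ar B"
  shows "\<exists>h. surj_hom Sig (pow ar A (card (dom A) ^ card (dom B))) B h"
proof -
  define k where "k = card (dom B)"
  define m where "m = card (dom A) ^ k"
  define T where "T = PiE {..<k} (\<lambda>_. dom A)"
  have cT: "card T = m" using fA by (simp add: T_def m_def card_PiE)
  have fT: "finite T" using fA by (simp add: T_def finite_PiE)
  obtain \<nu> where nu: "bij_betw \<nu> {0..<m} T" using ex_bij_betw_nat_finite[OF fT] cT by metis
  define D where "D = dom (pow ar A m)"
  have D_eq: "D = PiE {..<m} (\<lambda>_. dom A)" by (simp add: D_def pow_def)
  have fD: "finite D" using fA by (simp add: D_eq finite_PiE)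
  define N where "N = card D"
  obtain \<delta> where de: "bij_betw \<delta> {0..<N} D" using ex_bij_betw_nat_finite[OF fD] N_def by metis
  obtain \<beta> where be: "bij_betw \<beta> {0..<k} (dom B)" using ex_bij_betw_nat_finite[OF fB] k_def by metis
  have Bne: "dom B \<noteq> {}" using sB by (simp add: is_struc_def)
  have k1: "0 < k" using Bne fB by (simp add: k_def card_gt_0_iff)
  define var where "var f = k + inv_into {0..<N} \<delta> f" for f
  define \<pi> where "\<pi> j = restrict (\<lambda>i. \<nu> i j) {..<m}" for j
  define X where "X = {k..<k+N}"
  have varX: "var f \<in> X" if "f \<in> D" for f
  proof -
    have "inv_into {0..<N} \<delta> f \<in> {0..<N}"
      using bij_betwE[OF bij_betw_inv_into[OF de]] that by blast
    then show ?thesis by (auto simp: var_def X_def)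
  qed
  have de_var: "\<delta> (var f - k) = f" if "f \<in> D" for f
    using bij_betw_inv_into_right[OF de that] by (simp add: var_def)
  have \<pi>D: "\<pi> j \<in> D" if "j < k" for j
  proof -
    have "\<nu> i \<in> T" if "i < m" for i using nu that by (auto dest: bij_betwE)
    then show ?thesis using that by (auto simp: D_eq \<pi>_def T_def)
  qed
  define AT where "AT = Sigma Sig (\<lambda>R. rel (pow ar A m) R)"
  have "finite AT" unfolding AT_def
  proof (rule finite_SigmaI[OF fS])
    fix R assume "R \<in> Sig"
    have "rel (pow ar A m) R \<subseteq> {t. set t \<subseteq> D \<and> length t = ar R}"
      by (auto simp: pow_def D_eq)
    then show "finite (rel (pow ar A m) R)"
      using finite_lists_length_eq[OF fD] by (rule finite_subset)
  qed
  then obtain ats where ats: "set ats = AT" using finite_list by blast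
  define qs where "qs = map (\<lambda>(R,t). Atom R (map var t)) ats @ map (\<lambda>j. Eq j (var (\<pi> j))) [0..<k]"
  define P where "P = foldr Conj qs (Eq 0 0)"
  define \<phi> where "\<phi> = foldr All [0..<k] (foldr Ex [k..<k+N] P)"
  have qfP: "qfree P" by (auto simp: P_def qfree_foldr_Conj qs_def)
  have wfP: "wf_pH Sig ar P"
    by (auto simp: P_def wf_foldr_Conj qs_def ats AT_def pow_def)
  have fvP: "fv P \<subseteq> {0..<k} \<union> X"
  proof -
    have "fv q \<subseteq> {0..<k} \<union> X" if "q \<in> set qs" for q
    proof -
      from that consider (a) R t where "(R,t) \<in> AT" "q = Atom R (map var t)"
            | (b) j where "j < k" "q = Eq j (var (\<pi> j))" by (auto simp: qs_def ats)
      then show ?thesis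
      proof cases
        case a
        then have "set t \<subseteq> D" by (auto simp: AT_def pow_def D_eq)
        then have "var ` set t \<subseteq> X" using varX by auto
        then show ?thesis using a by auto
      next
        case b
        then have "var (\<pi> j) \<in> X" using varX \<pi>D by auto
        then show ?thesis using b by auto
      qed
    qed
    then show ?thesis using k1 by (auto simp: P_def fv_foldr_Conj)
  qed
  have "\<phi> \<in> Pi2_CSP Sig ar A"
  proof -
    have "fv \<phi> = {}" using fvP by (auto simp: \<phi>_def fv_foldr_All fv_foldr_Ex X_def)
    moreover have "wf_pH Sig ar \<phi>" using wfP by (simp add: \<phi>_def wf_foldr_All wf_foldr_Ex)
    moreover have "is_Pi2 \<phi>" using qfP unfolding is_Pi2_def \<phi>_def by blast
    moreover have "sat A \<phi> e" for e
      unfolding \<phi>_def sat_foldr_All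
    proof (intro allI impI)
      fix e1 assume e1: "(\<forall>v. v \<notin> set [0..<k] \<longrightarrow> e1 v = e v) \<and> (\<forall>v\<in>set [0..<k]. e1 v \<in> dom A)"
      define \<tau> where "\<tau> = restrict e1 {..<k}"
      have \<tau>T: "\<tau> \<in> T" using e1 by (auto simp: \<tau>_def T_def)
      define idx where "idx = inv_into {0..<m} \<nu> \<tau>"
      have idx: "idx < m" using bij_betw_inv_into[OF nu] \<tau>T by (auto simp: idx_def dest: bij_betwE)
      have nuidx: "\<nu> idx = \<tau>" using bij_betw_inv_into_right[OF nu \<tau>T] by (simp add: idx_def)
      define e2 where "e2 v = (if v \<in> X then \<delta> (v - k) idx else e1 v)" for v
      have e2var: "e2 (var f) = f idx" if "f \<in> D" for f
        using varX[OF that] de_var[OF that] by (simp add: e2_def)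
      show "sat A (foldr Ex [k..<k + N] P) e1"
        unfolding sat_foldr_Ex
      proof (intro exI[of _ e2] conjI)
        show "\<forall>v. v \<notin> set [k..<k + N] \<longrightarrow> e2 v = e1 v" by (auto simp: e2_def X_def)
        show "\<forall>v\<in>set [k..<k + N]. e2 v \<in> dom A"
        proof
          fix v assume "v \<in> set [k..<k + N]"
          then have "v \<in> X" "v - k \<in> {0..<N}" by (auto simp: X_def)
          then show "e2 v \<in> dom A" using bij_betwE[OF de] idx by (auto simp: e2_def D_eq)
        qed
        show "sat A P e2" unfolding P_def sat_foldr_Conj
        proof (intro conjI ballI)
          show "sat A (Eq 0 0) e2" by simp
          fix q assume "q \<in> set qs"
          then consider (a) R t where "(R,t) \<in> AT" "q = Atom R (map var t)"
            | (b) j where "j < k" "q = Eq j (var (\<pi> j))" by (auto simp: qs_def ats)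
          then show "sat A q e2"
          proof cases
            case a
            then have tD: "set t \<subseteq> D" and tr: "t \<in> rel (pow ar A m) R"
              by (auto simp: AT_def pow_def D_eq)
            have "map e2 (map var t) = map (\<lambda>f. f idx) t"
              using tD e2var by (auto simp: subset_iff)
            moreover have "map (\<lambda>f. f idx) t \<in> rel A R" using tr idx by (simp add: pow_def)
            ultimately have "map e2 (map var t) \<in> rel A R" by (simp only:)
            then show ?thesis using a(2) by (simp only: sat.simps)
          next
            case b
            have "e2 (var (\<pi> j)) = \<pi> j idx" using e2var \<pi>D b by simp
            also have "\<dots> = e1 j" using idx nuidx b by (simp add: \<pi>_def \<tau>_def)
            also have "\<dots> = e2 j" using b by (simp add: e2_def X_def)
            finally show ?thesis using b by simp
          qed
        qed
      qed
    qed
    ultimately show ?thesis unfolding Pi2_CSP_def QCSP_def by blast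
  qed
  then have "\<phi> \<in> Pi2_CSP Sig ar B" using inc by blast
  then have sB\<phi>: "sat B \<phi> \<beta>" by (simp add: Pi2_CSP_def QCSP_def)
  have "\<forall>v\<in>set [0..<k]. \<beta> v \<in> dom B" using be by (auto dest: bij_betwE)
  then have "sat B (foldr Ex [k..<k+N] P) \<beta>" using sB\<phi> unfolding \<phi>_def sat_foldr_All by blast
  then obtain e2 where e2: "\<forall>v. v \<notin> X \<longrightarrow> e2 v = \<beta> v" "\<forall>v\<in>X. e2 v \<in> dom B" "sat B P e2"
    unfolding sat_foldr_Ex X_def by auto
  define g where "g f = e2 (var f)" for f
  have qs_sat: "sat B q e2" if "q \<in> set qs" for q using e2(3) that by (simp add: P_def sat_foldr_Conj)
  have "surj_hom Sig (pow ar A m) B g"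
    unfolding surj_hom_def hom_def
  proof (intro conjI ballI)
    show sub: "g ` dom (pow ar A m) \<subseteq> dom B" using e2(2) varX by (auto simp: g_def D_def)
    fix R t assume R: "R \<in> Sig" and t: "t \<in> rel (pow ar A m) R"
    then have "Atom R (map var t) \<in> set qs" by (force simp: qs_def ats AT_def)
    then have "map e2 (map var t) \<in> rel B R" using qs_sat by fastforce
    moreover have "map g t = map e2 (map var t)" by (simp add: g_def)
    ultimately show "map g t \<in> rel B R" by (simp only:)
  next
    show "g ` dom (pow ar A m) = dom B"
    proof
      show "g ` dom (pow ar A m) \<subseteq> dom B" using e2(2) varX by (auto simp: g_def D_def)
      show "dom B \<subseteq> g ` dom (pow ar A m)"
      proof
        fix b assume "b \<in> dom B"
        then obtain j where j: "j < k" "b = \<beta> j" using be unfolding bij_betw_def by (metis atLeastLessThan_iff imageE)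
        have "Eq j (var (\<pi> j)) \<in> set qs" using j by (simp add: qs_def)
        then have "e2 (var (\<pi> j)) = e2 j" using qs_sat by fastforce
        also have "\<dots> = b" using e2(1) j by (simp add: X_def)
        finally show "b \<in> g ` dom (pow ar A m)" using \<pi>D[OF j(1)] by (auto simp: g_def D_def)
      qed
    qed
  qed
  then show ?thesis by (auto simp: m_def k_def)
qed


lemma preserve:
  assumes sA: "is_struc Sig ar A" and h: "surj_hom Sig (pow ar A r) B h"
    and phi: "\<phi> \<in> QCSP Sig ar A"
  shows "\<phi> \<in> QCSP Sig ar B"
proof -
  have wf: "wf_pH Sig ar \<phi>" and fv: "fv \<phi> = {}" and sa: "\<And>e. sat A \<phi> e"
    using phi by (auto simp: QCSP_def)
  obtain a where a: "a \<in> dom A" using sA by (auto simp: is_struc_def)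
  define a0 where "a0 = restrict (\<lambda>_. a) {..<r}"
  have a0: "a0 \<in> dom (pow ar A r)" using a by (simp add: a0_def pow_def)
  have "sat (pow ar A r) \<phi> (\<lambda>_. a0)"
    by (rule sat_pow[OF wf]) (use a0 sa in auto)
  then have sb: "sat B \<phi> (h \<circ> (\<lambda>_. a0))"
    by (rule sat_hom[OF h wf, rotated]) (use a0 in auto)
  have "sat B \<phi> e" for e
    using sat_agree[of \<phi> e "h \<circ> (\<lambda>_. a0)" B] fv sb by simp
  then show ?thesis using wf fv unfolding QCSP_def by blast
qed

theorem mainTheorem1:
  fixes Sig :: "'r set" and ar :: "'r \<Rightarrow> nat"
    and A :: "('r, 'a) struc" and B :: "('r, 'b) struc"
  assumes "finite Sig"
    and "is_struc Sig ar A" and "is_struc Sig ar B"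
    and "finite (dom A)" and "finite (dom B)"
  shows "((\<exists>h. surj_hom Sig (pow ar A (card (dom A) ^ card (dom B))) B h)
            \<longleftrightarrow> (\<exists>r::nat. 0 < r \<and> (\<exists>h. surj_hom Sig (pow ar A r) B h)))
       \<and> ((\<exists>r::nat. 0 < r \<and> (\<exists>h. surj_hom Sig (pow ar A r) B h))
            \<longleftrightarrow> QCSP Sig ar A \<subseteq> QCSP Sig ar B)
       \<and> (QCSP Sig ar A \<subseteq> QCSP Sig ar B
            \<longleftrightarrow> Pi2_CSP Sig ar A \<subseteq> Pi2_CSP Sig ar B)"
proof -
  let ?I = "\<exists>h. surj_hom Sig (pow ar A (card (dom A) ^ card (dom B))) B h"
  let ?II = "\<exists>r::nat. 0 < r \<and> (\<exists>h. surj_hom Sig (pow ar A r) B h)"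
  let ?III = "QCSP Sig ar A \<subseteq> QCSP Sig ar B"
  let ?IV = "Pi2_CSP Sig ar A \<subseteq> Pi2_CSP Sig ar B"
  have pos: "0 < card (dom A) ^ card (dom B)"
    using assms(2,4) by (auto simp: is_struc_def card_gt_0_iff)
  have 12: "?I \<Longrightarrow> ?II" using pos by blast
  have 23: "?II \<Longrightarrow> ?III" using preserve[OF assms(2)] by blast
  have 34: "?III \<Longrightarrow> ?IV" by (auto simp: Pi2_CSP_def)
  have 41: "?IV \<Longrightarrow> ?I" using canon[OF assms] by blast
  show ?thesis using 12 23 34 41 by blast
qed

end
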